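(* Let $\Lambda_{({\bf A},{\bf B},{\bf c})}:\mathcal L(\mathcal H^{\otimes N'})\to\mathcal L(\mathcal H^{\otimes N})$ be a Gaussian channel. Then $\Lambda_{({\bf A},{\bf B},{\bf c})}$ is Gaussian incompatibility breaking if and only if ${\bf B}-i{\bf A}^T{\bf \Omega}{\bf A}\ge {\bf 0}$.
   Context: For $n\ge1$, $\mathcal H^{\otimes n}=L^2(\mathbb R^n)$ with canonical position and momentum operators $Q_j,P_j$, ${\bf R}=(Q_1,P_1,\ldots,Q_n,P_n)^T$, ${\bf \Omega}=\bigoplus_{j=1}^n\begin{pmatrix}0&1\\-1&0\end{pmatrix}$ (its size is determined by the phase space on which it acts), and Weyl operators $W({\bf x})=e^{-i{\bf x}^T{\bf \Omega R}}$, ${\bf x}\in\mathbb R^{2n}$. A Gaussian channel (Heisenberg picture) is a normal unital completely positive map $\Lambda:\mathcal L(\mathcal H^{\otimes N'})\to\mathcal L(\mathcal H^{\otimes N})$ with $\Lambda(W({\bf x}))=W({\bf Ax})e^{-\frac14{\bf x}^T{\bf Bx}-i{\bf c}^T{\bf x}}$ for ${\bf x}\in\mathbb R^{2N'}$, where ${\bf A}$ is a real $2N\times 2N'$ matrix, ${\bf B}$ a real $2N'\times 2N'$ matrix, ${\bf c}\in\mathbb R^{2N'}$, subject to ${\bf B}+i{\bf \Omega}-i{\bf A}^T{\bf \Omega A}\ge{\bf 0}$; it is denoted $\Lambda_{({\bf A},{\bf B},{\bf c})}$. An observable is a POVM $\mathsf{E}:\mathcal B(\mathbb R^M)\to\mathcal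 L(\mathcal H^{\otimes n})$; it is Gaussian if $\int e^{i{\bf p}^T{\bf x}}\,d\mathsf{E}({\bf x})=W({\bf Kp})e^{-\frac14{\bf p}^T{\bf Lp}-i{\bf m}^T{\bf p}}$ with ${\bf K}$ real $2n\times M$, ${\bf L}$ real $M\times M$ satisfying ${\bf L}-i{\bf K}^T{\bf \Omega K}\ge0$, ${\bf m}\in\mathbb R^M$ (every such triple determines a Gaussian observable). A channel transforms an observable $\mathsf{E}$ on $\mathcal H^{\otimes N'}$ into $\Lambda(\mathsf{E}):X\mapsto\Lambda(\mathsf{E}(X))$; for a Gaussian $\mathsf{E}$ with parameters $({\bf K},{\bf L},{\bf m})$, $\Lambda_{({\bf A},{\bf B},{\bf c})}(\mathsf{E})$ is Gaussian with parameters $({\bf AK},{\bf L}+{\bf K}^T{\bf BK},{\bf m}+{\bf K}^T{\bf c})$. A Gaussian postprocessing is a Markov kernel $f:\mathcal B(\mathbb R^{M'})\times\mathbb R^M\to[0,1]$ such that $\int e^{i{\bf p}^T{\bf y}}f(d{\bf y},{\bf x})=e^{i({\bf A}'{\bf p})^T{\bf x}}e^{-\frac14{\bf p}^T{\bf B}'{\bf p}-i{\bf c}'^T{\bf p}}$ for some real $M\times M'$ matrix ${\bf A}'$, real positive semidefinite ${\bf B}'$ and vector ${\bf c}'$; $\mathsf{E}$ is obtained from $\mathsf{G}$ via $f$ if $\mathsf{E}(X)=\int f(X,{\bf x})\,d\mathsf{G}({\bf x})$ (for $\mathsf{G}$ Gaussian with parameters $({\bf K},{\bf L},{\bf m})$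 this yields parameters $({\bf KA}',{\bf B}'+{\bf A}'^T{\bf LA}',{\bf c}'+{\bf A}'^T{\bf m})$). A collection of Gaussian observables is Gaussian compatible if there is a Gaussian observable $\mathsf{G}$ from which each member is obtained via some Gaussian postprocessing. A Gaussian channel $\Lambda$ is Gaussian incompatibility breaking if the set $\{\Lambda(\mathsf{E}):\mathsf{E}$ a Gaussian observable on $\mathcal H^{\otimes N'}\}$ is Gaussian compatible. *)

theory Defs
  imports Complex_Main "Jordan_Normal_Form.Matrix"
begin

type_synonym gparams = "real mat \<times> real mat \<times> real vec"

definition Omega :: "nat \<Rightarrow> real mat" where
  "Omega n = mat (2*n) (2*n) (\<lambda>(i,j). if even i \<and> j = i + 1 then 1
                                      else if odd i \<and> j + 1 = i then -1 else 0)"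

definition cplx :: "real mat \<Rightarrow> complex mat" where
  "cplx X = map_mat complex_of_real X"

definition psd :: "nat \<Rightarrow> complex mat \<Rightarrow> bool" where
  "psd d X \<longleftrightarrow> X \<in> carrier_mat d d \<and>
     (\<forall>v \<in> carrier_vec d. Im (conjugate v \<bullet> (X *\<^sub>v v)) = 0 \<and>
                          Re (conjugate v \<bullet> (X *\<^sub>v v)) \<ge> 0)"

text \<open>Parameters (A,B,c) of a Gaussian channel L(H^{N'}) -> L(H^N) (Heisenberg picture).\<close>
definition gaussian_channel :: "nat \<Rightarrow> nat \<Rightarrow> real mat \<Rightarrow> real mat \<Rightarrow> real vec \<Rightarrow> bool" where
  "gaussian_channel N N' A B c \<longleftrightarrow>
     A \<in> carrier_mat (2*N) (2*N') \<and> B \<in> carrier_mat (2*N') (2*N') \<and> c \<in> carrier_vec (2*N') \<and>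
     psd (2*N') (cplx B + \<i> \<cdot>\<^sub>m cplx (Omega N') - \<i> \<cdot>\<^sub>m cplx (transpose_mat A * Omega N * A))"

text \<open>Parameters (K,L,m) of a Gaussian observable on H^n with outcome space R^M.\<close>
definition gaussian_obs :: "nat \<Rightarrow> nat \<Rightarrow> gparams \<Rightarrow> bool" where
  "gaussian_obs n M E \<longleftrightarrow> (case E of (K, L, m) \<Rightarrow>
     K \<in> carrier_mat (2*n) M \<and> L \<in> carrier_mat M M \<and> m \<in> carrier_vec M \<and>
     psd M (cplx L - \<i> \<cdot>\<^sub>m cplx (transpose_mat K * Omega n * K)))"

definition outdim :: "gparams \<Rightarrow> nat" where
  "outdim E = dim_vec (snd (snd E))"

definition channel_apply :: "real mat \<Rightarrow> real mat \<Rightarrow> real vec \<Rightarrow> gparams \<Rightarrow> gparams" where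
  "channel_apply A B c E = (case E of (K, L, m) \<Rightarrow>
     (A * K, L + transpose_mat K * B * K, m + transpose_mat K *\<^sub>v c))"

text \<open>Gaussian postprocessing R^M -> R^M' with parameters (A',B',c'), B' real positive
  semidefinite (hence symmetric).\<close>
definition gaussian_postproc :: "nat \<Rightarrow> nat \<Rightarrow> real mat \<Rightarrow> real mat \<Rightarrow> real vec \<Rightarrow> bool" where
  "gaussian_postproc M M' A' B' c' \<longleftrightarrow>
     A' \<in> carrier_mat M M' \<and> B' \<in> carrier_mat M' M' \<and> c' \<in> carrier_vec M' \<and> psd M' (cplx B')"

definition postprocess :: "gparams \<Rightarrow> real mat \<Rightarrow> real mat \<Rightarrow> real vec \<Rightarrow> gparams" where
  "postprocess G A' B' c' = (case G of (K, L, m) \<Rightarrow>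
     (K * A', B' + transpose_mat A' * L * A', c' + transpose_mat A' *\<^sub>v m))"

definition obtained_from :: "gparams \<Rightarrow> gparams \<Rightarrow> bool" where
  "obtained_from E G \<longleftrightarrow> (\<exists>A' B' c'. gaussian_postproc (outdim G) (outdim E) A' B' c' \<and>
                                      E = postprocess G A' B' c')"

definition gaussian_compatible :: "nat \<Rightarrow> gparams set \<Rightarrow> bool" where
  "gaussian_compatible n S \<longleftrightarrow>
     (\<exists>G M. M \<ge> 1 \<and> gaussian_obs n M G \<and> (\<forall>E \<in> S. obtained_from E G))"

definition gaussian_incompatibility_breaking ::
  "nat \<Rightarrow> nat \<Rightarrow> real mat \<Rightarrow> real mat \<Rightarrow> real vec \<Rightarrow> bool" where
  "gaussian_incompatibility_breaking N N' A B c \<longleftrightarrow>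
     gaussian_compatible N {channel_apply A B c E | E M. M \<ge> 1 \<and> gaussian_obs N' M E}"

end

theory Submission imports Defs begin

definition qf :: "real mat \<Rightarrow> real vec \<Rightarrow> real vec \<Rightarrow> real" where
  "qf R x y = x \<bullet> (R *\<^sub>v y)"

lemma qf_sum: "R \<in> carrier_mat d d \<Longrightarrow> y \<in> carrier_vec d \<Longrightarrow>
  qf R x y = (\<Sum>i<d. \<Sum>j<d. x$i * R$$(i,j) * y$j)"
  unfolding qf_def scalar_prod_def
  by (auto simp: row_def scalar_prod_def sum_distrib_left mult.assoc intro!: sum.cong simp flip: atLeast0LessThan)

lemma cqf_sum: "X \<in> carrier_mat d d \<Longrightarrow> (v::complex vec) \<in> carrier_vec d \<Longrightarrow>
  conjugate v \<bullet> (X *\<^sub>v v) = (\<Sum>i<d. \<Sum>j<d. cnj (v$i) * X$$(i,j) * v$j)"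
  unfolding scalar_prod_def
  by (auto simp: row_def scalar_prod_def sum_distrib_left mult.assoc intro!: sum.cong simp flip: atLeast0LessThan)

lemma key:
  assumes R: "R \<in> carrier_mat d d" and S: "S \<in> carrier_mat d d" and v: "v \<in> carrier_vec d"
  defines "x \<equiv> map_vec Re v" and "y \<equiv> map_vec Im v"
  shows "conjugate v \<bullet> ((cplx R - \<i> \<cdot>\<^sub>m cplx S) *\<^sub>v v) =
    Complex (qf R x x + qf R y y + qf S x y - qf S y x) (qf R x y - qf R y x - qf S x x - qf S y y)"
proof -
  have X: "cplx R - \<i> \<cdot>\<^sub>m cplx S \<in> carrier_mat d d" using R S by (auto simp: cplx_def)
  have xy: "x \<in> carrier_vec d" "y \<in> carrier_vec d" using v by (auto simp: x_def y_def)
  show ?thesis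
    unfolding cqf_sum[OF X v] qf_sum[OF R xy(1)] qf_sum[OF R xy(2)] qf_sum[OF S xy(1)] qf_sum[OF S xy(2)]
    using R S v
    apply (intro complex_eqI)
     apply (simp_all add: Re_sum Im_sum cplx_def x_def y_def flip: sum_subtractf sum.distrib)
     apply (intro sum.cong refl; simp add: algebra_simps)+
    done
qed
definition PhiF where "PhiF R S x y = qf R x x + qf R y y + qf S x y - qf S y x"
definition PsiF where "PsiF R S x y = qf R x y - qf R y x - qf S x x - qf S y y"

lemma psd_iff:
  assumes R: "R \<in> carrier_mat d d" and S: "S \<in> carrier_mat d d"
  shows "psd d (cplx R - \<i> \<cdot>\<^sub>m cplx S) \<longleftrightarrow>
    (\<forall>x\<in>carrier_vec d. \<forall>y\<in>carrier_vec d. PsiF R S x y = 0 \<and> PhiF R S x y \<ge> 0)"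
proof
  assume p: "psd d (cplx R - \<i> \<cdot>\<^sub>m cplx S)"
  show "\<forall>x\<in>carrier_vec d. \<forall>y\<in>carrier_vec d. PsiF R S x y = 0 \<and> PhiF R S x y \<ge> 0"
  proof (intro ballI)
    fix x y :: "real vec" assume x: "x \<in> carrier_vec d" and y: "y \<in> carrier_vec d"
    define v where "v = vec d (\<lambda>i. Complex (x$i) (y$i))"
    have v: "v \<in> carrier_vec d" by (simp add: v_def)
    have vx: "map_vec Re v = x" using x by (intro eq_vecI) (auto simp: v_def)
    have vy: "map_vec Im v = y" using y by (intro eq_vecI) (auto simp: v_def)
    from p v have "Im (conjugate v \<bullet> ((cplx R - \<i> \<cdot>\<^sub>m cplx S) *\<^sub>v v)) = 0 \<and>
                          Re (conjugate v \<bullet> ((cplx R - \<i> \<cdot>\<^sub>m cplx S) *\<^sub>v v)) \<ge> 0"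
      unfolding psd_def by blast
    then show "PsiF R S x y = 0 \<and> PhiF R S x y \<ge> 0"
      unfolding key[OF R S v] vx vy PsiF_def PhiF_def by simp
  qed
next
  assume h: "\<forall>x\<in>carrier_vec d. \<forall>y\<in>carrier_vec d. PsiF R S x y = 0 \<and> PhiF R S x y \<ge> 0"
  show "psd d (cplx R - \<i> \<cdot>\<^sub>m cplx S)"
    unfolding psd_def
  proof (intro conjI ballI)
    show "cplx R - \<i> \<cdot>\<^sub>m cplx S \<in> carrier_mat d d" using R S by (auto simp: cplx_def)
  next
    fix v :: "complex vec" assume v: "v \<in> carrier_vec d"
    have c: "map_vec Re v \<in> carrier_vec d" "map_vec Im v \<in> carrier_vec d" using v by auto
    from h c show "Im (conjugate v \<bullet> ((cplx R - \<i> \<cdot>\<^sub>m cplx S) *\<^sub>v v)) = 0"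
      "Re (conjugate v \<bullet> ((cplx R - \<i> \<cdot>\<^sub>m cplx S) *\<^sub>v v)) \<ge> 0"
      unfolding key[OF R S v] PsiF_def PhiF_def by auto
  qed
qed

lemma Omega_carrier[simp]: "Omega n \<in> carrier_mat (2*n) (2*n)"
  by (simp add: Omega_def)

lemma Omega_anti: "i < 2*n \<Longrightarrow> j < 2*n \<Longrightarrow> Omega n $$ (j,i) = - Omega n $$ (i,j)"
  by (auto simp: Omega_def)

lemma qf_Omega: assumes u: "u \<in> carrier_vec (2*n)" shows "qf (Omega n) u u = 0"
proof -
  let ?d = "2*n"
  have "qf (Omega n) u u = (\<Sum>i<?d. \<Sum>j<?d. u$i * Omega n $$ (i,j) * u$j)"
    by (rule qf_sum[OF Omega_carrier u])
  also have "\<dots> = (\<Sum>j<?d. \<Sum>i<?d. u$i * Omega n $$ (i,j) * u$j)" by (rule sum.swap)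
  also have "\<dots> = (\<Sum>j<?d. \<Sum>i<?d. - (u$j * Omega n $$ (j,i) * u$i))"
    apply (intro sum.cong refl)
    subgoal for j i using Omega_anti[of i n j] by simp
    done
  also have "\<dots> = - qf (Omega n) u u"
    by (simp add: qf_sum[OF Omega_carrier u] sum_negf)
  finally show ?thesis by simp
qed

lemma qf_conj: assumes A: "A \<in> carrier_mat n m" and W: "W \<in> carrier_mat n n"
  and x: "x \<in> carrier_vec m" and y: "y \<in> carrier_vec m"
  shows "qf (transpose_mat A * W * A) x y = qf W (A *\<^sub>v x) (A *\<^sub>v y)"
proof -
  have c: "transpose_mat A * W \<in> carrier_mat m n" using A W by auto
  have e1: "(transpose_mat A * W * A) *\<^sub>v y = (transpose_mat A * W) *\<^sub>v (A *\<^sub>v y)"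
    using c A y by (rule assoc_mult_mat_vec)
  have e2: "(transpose_mat A * W) *\<^sub>v (A *\<^sub>v y) = transpose_mat A *\<^sub>v (W *\<^sub>v (A *\<^sub>v y))"
    using A W y by (intro assoc_mult_mat_vec[of _ m n _ n]) auto
  have "x \<bullet> (transpose_mat A *\<^sub>v (W *\<^sub>v (A *\<^sub>v y))) = (transpose_mat A *\<^sub>v (W *\<^sub>v (A *\<^sub>v y))) \<bullet> x"
    using A W x y by (intro comm_scalar_prod[of _ m]) auto
  also have "\<dots> = (W *\<^sub>v (A *\<^sub>v y)) \<bullet> (A *\<^sub>v x)"
    using A W x y by (intro transpose_vec_mult_scalar) auto
  also have "\<dots> = (A *\<^sub>v x) \<bullet> (W *\<^sub>v (A *\<^sub>v y))"
    using A W x y by (intro comm_scalar_prod[of _ n]) auto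
  finally show ?thesis by (simp add: qf_def e1 e2)
qed

lemma entry_conj: assumes K: "K \<in> carrier_mat d m" and B: "B \<in> carrier_mat d d"
  and i: "i < m" and j: "j < m"
  shows "(transpose_mat K * B * K) $$ (i,j) = qf B (col K i) (col K j)"
proof -
  have "transpose_mat K * B * K = transpose_mat K * (B * K)" using K B by (simp add: assoc_mult_mat[of _ m d _ d _ m])
  then show ?thesis using K B i j by (simp add: qf_def mult_mat_vec_def)
qed

lemma qf_zero_mat: "y \<in> carrier_vec d \<Longrightarrow> qf (0\<^sub>m d d) x y = 0"
  by (simp add: qf_sum[OF zero_carrier_mat])
lemma qf_zero_l: "R \<in> carrier_mat d d \<Longrightarrow> y \<in> carrier_vec d \<Longrightarrow> qf R (0\<^sub>v d) y = 0"
  by (simp add: qf_sum)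
lemma qf_zero_r: "R \<in> carrier_mat d d \<Longrightarrow> qf R x (0\<^sub>v d) = 0"
  by (simp add: qf_sum)
lemma qf_uminus_r: "R \<in> carrier_mat d d \<Longrightarrow> y \<in> carrier_vec d \<Longrightarrow> qf R x (- y) = - qf R x y"
  by (simp add: qf_sum sum_negf)
lemma qf_uminus_l: "R \<in> carrier_mat d d \<Longrightarrow> y \<in> carrier_vec d \<Longrightarrow> x \<in> carrier_vec d \<Longrightarrow> qf R (- x) y = - qf R x y"
  by (simp add: qf_sum sum_negf)
lemma qf_minus_mat: "R \<in> carrier_mat d d \<Longrightarrow> S \<in> carrier_mat d d \<Longrightarrow> y \<in> carrier_vec d \<Longrightarrow>
   qf (R - S) x y = qf R x y - qf S x y"
proof -
  assume R: "R \<in> carrier_mat d d" and S: "S \<in> carrier_mat d d" and y: "y \<in> carrier_vec d"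
  have RS: "R - S \<in> carrier_mat d d" using S by (rule minus_carrier_mat)
  show ?thesis using R S
    by (simp add: qf_sum[OF RS y] qf_sum[OF R y] qf_sum[OF S y] algebra_simps flip: sum_subtractf)
qed
lemma qf_one: "R \<in> carrier_mat 1 1 \<Longrightarrow> b \<in> carrier_vec 1 \<Longrightarrow> qf R a b = a$0 * R$$(0,0) * b$0"
  by (simp add: qf_sum)

lemma cplx_zero_eq: "R \<in> carrier_mat d d \<Longrightarrow> cplx R = cplx R - \<i> \<cdot>\<^sub>m cplx (0\<^sub>m d d)"
  by (intro eq_matI) (auto simp: cplx_def)

lemma psd_real: assumes R: "R \<in> carrier_mat d d"
  shows "psd d (cplx R) \<longleftrightarrow> (\<forall>x\<in>carrier_vec d. \<forall>y\<in>carrier_vec d. PsiF R (0\<^sub>m d d) x y = 0 \<and> PhiF R (0\<^sub>m d d) x y \<ge> 0)"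
  using psd_iff[OF R zero_carrier_mat] cplx_zero_eq[OF R] by simp

theorem proposition2:
  fixes N N' :: nat and A B :: "real mat" and c :: "real vec"
  assumes "N \<ge> 1" and "N' \<ge> 1"
    and "gaussian_channel N N' A B c"
  shows "gaussian_incompatibility_breaking N N' A B c \<longleftrightarrow>
         psd (2*N') (cplx B - \<i> \<cdot>\<^sub>m cplx (transpose_mat A * Omega N * A))"
proof -
  define d where "d = 2*N'"
  define J where "J = transpose_mat A * Omega N * A"
  have A: "A \<in> carrier_mat (2*N) d" and B: "B \<in> carrier_mat d d" and c: "c \<in> carrier_vec d"
    and pc: "psd d (cplx B + \<i> \<cdot>\<^sub>m cplx (Omega N') - \<i> \<cdot>\<^sub>m cplx J)"
    using assms(3) unfolding gaussian_channel_def d_def J_def by auto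
  have J: "J \<in> carrier_mat d d" using A unfolding J_def by auto
  have Om: "Omega N' \<in> carrier_mat d d" by (simp add: d_def)
  have "cplx B + \<i> \<cdot>\<^sub>m cplx (Omega N') - \<i> \<cdot>\<^sub>m cplx J = cplx B - \<i> \<cdot>\<^sub>m cplx (J - Omega N')"
    using B J Om by (intro eq_matI) (auto simp: cplx_def algebra_simps)
  with pc have pc': "psd d (cplx B - \<i> \<cdot>\<^sub>m cplx (J - Omega N'))" by simp
  have JOm: "J - Omega N' \<in> carrier_mat d d" using J Om by auto
  have Jxx: "qf J x x = 0" if x: "x \<in> carrier_vec d" for x
    unfolding J_def using qf_conj[OF A Omega_carrier x x] qf_Omega[OF mult_mat_vec_carrier[OF A x]] by simp
  have Omxx: "qf (Omega N') x x = 0" if x: "x \<in> carrier_vec d" for x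
    using qf_Omega[of x N'] x by (simp add: d_def)
  have Bsym: "qf B x y = qf B y x" if x: "x \<in> carrier_vec d" and y: "y \<in> carrier_vec d" for x y
  proof -
    have "PsiF B (J - Omega N') x y = 0" using pc' psd_iff[OF B JOm] x y by blast
    then show ?thesis using qf_minus_mat[OF J Om x] qf_minus_mat[OF J Om y] Jxx[OF x] Jxx[OF y]
        Omxx[OF x] Omxx[OF y] unfolding PsiF_def by simp
  qed
  show ?thesis
  proof
    assume IB: "gaussian_incompatibility_breaking N N' A B c"
    then obtain G M where M1: "M \<ge> 1" and GO: "gaussian_obs N M G"
      and GE: "\<forall>E\<in>{channel_apply A B c E | E M. M \<ge> 1 \<and> gaussian_obs N' M E}. obtained_from E G"
      unfolding gaussian_incompatibility_breaking_def gaussian_compatible_def by blast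
    obtain KG LG mG where G: "G = (KG, LG, mG)" by (cases G) auto
    have KG: "KG \<in> carrier_mat (2*N) M" and LG: "LG \<in> carrier_mat M M" and mG: "mG \<in> carrier_vec M"
      and pG: "psd M (cplx LG - \<i> \<cdot>\<^sub>m cplx (transpose_mat KG * Omega N * KG))"
      using GO unfolding gaussian_obs_def G by auto
    define SG where "SG = transpose_mat KG * Omega N * KG"
    have SG: "SG \<in> carrier_mat M M" using KG unfolding SG_def by auto
    have key1: "\<exists>a\<in>carrier_vec M. A *\<^sub>v x = KG *\<^sub>v a \<and> qf LG a a \<le> qf B x x"
      if x: "x \<in> carrier_vec d" for x
    proof -
      define X where "X = mat d 1 (\<lambda>(i,j). x$i)"
      have X: "X \<in> carrier_mat d 1" by (simp add: X_def)
      have colX: "col X 0 = x" using x by (intro eq_vecI) (auto simp: X_def)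
      define S where "S = transpose_mat X * Omega N' * X"
      have S: "S \<in> carrier_mat 1 1" using X unfolding S_def by auto
      have S00: "S $$ (0,0) = 0"
        unfolding S_def using entry_conj[OF X Om, of 0 0] colX Omxx[OF x] by simp
      have psdS: "psd 1 (cplx (0\<^sub>m 1 1) - \<i> \<cdot>\<^sub>m cplx S)"
        using psd_iff[OF zero_carrier_mat S] S S00
        by (simp add: PsiF_def PhiF_def qf_one qf_zero_mat)
      have obs: "gaussian_obs N' 1 (X, 0\<^sub>m 1 1, 0\<^sub>v 1)"
        unfolding gaussian_obs_def using X psdS by (simp add: d_def S_def)
      have "channel_apply A B c (X, 0\<^sub>m 1 1, 0\<^sub>v 1) \<in> {channel_apply A B c E | E M. M \<ge> 1 \<and> gaussian_obs N' M E}"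
        unfolding mem_Collect_eq using obs
        by (intro exI[of _ "(X, 0\<^sub>m 1 1, 0\<^sub>v 1)"] exI[of _ "1::nat"]) simp
      from bspec[OF GE this] have "obtained_from (channel_apply A B c (X, 0\<^sub>m 1 1, 0\<^sub>v 1)) G" .
      then obtain A' B' c' where pp: "gaussian_postproc M 1 A' B' c'"
        and eq: "channel_apply A B c (X, 0\<^sub>m 1 1, 0\<^sub>v 1) = postprocess G A' B' c'"
      proof -
        have o1: "outdim G = M" using mG by (simp add: outdim_def G)
        have o2: "outdim (channel_apply A B c (X, 0\<^sub>m 1 1, 0\<^sub>v 1)) = 1"
          using X by (simp add: outdim_def channel_apply_def)
        have "\<exists>A' B' c'. gaussian_postproc M 1 A' B' c' \<and> channel_apply A B c (X, 0\<^sub>m 1 1, 0\<^sub>v 1) = postprocess G A' B' c'"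
          using \<open>obtained_from (channel_apply A B c (X, 0\<^sub>m 1 1, 0\<^sub>v 1)) G\<close>
          unfolding obtained_from_def o1 o2 .
        then show ?thesis using that by (elim exE conjE)
      qed
      have A': "A' \<in> carrier_mat M 1" using pp unfolding gaussian_postproc_def by blast
      have B': "B' \<in> carrier_mat 1 1" using pp unfolding gaussian_postproc_def by blast
      have pB': "psd 1 (cplx B')" using pp unfolding gaussian_postproc_def by blast
      have e1: "A * X = KG * A'" and e2: "0\<^sub>m 1 1 + transpose_mat X * B * X = B' + transpose_mat A' * LG * A'"
      proof -
        have "(A * X, 0\<^sub>m 1 1 + transpose_mat X * B * X, 0\<^sub>v 1 + transpose_mat X *\<^sub>v c) =
              (KG * A', B' + transpose_mat A' * LG * A', c' + transpose_mat A' *\<^sub>v mG)"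
          using eq unfolding channel_apply_def postprocess_def G by (simp only: prod.case)
        then show "A * X = KG * A'" "0\<^sub>m 1 1 + transpose_mat X * B * X = B' + transpose_mat A' * LG * A'"
          by (simp_all only: prod.inject)
      qed
      define a where "a = col A' 0"
      have a: "a \<in> carrier_vec M" using col_carrier_vec[of 0 1 A' M] A' by (simp add: a_def)
      have "col (A * X) 0 = col (KG * A') 0" using e1 by simp
      moreover have "col (A * X) 0 = A *\<^sub>v x" using col_mult2[OF A X, of 0] colX by simp
      moreover have "col (KG * A') 0 = KG *\<^sub>v a" using col_mult2[OF KG A', of 0] by (simp add: a_def)
      ultimately have i1: "A *\<^sub>v x = KG *\<^sub>v a" by simp
      have T: "transpose_mat X * B * X \<in> carrier_mat 1 1" using X B by auto
      have U: "transpose_mat A' * LG * A' \<in> carrier_mat 1 1" using A' LG by auto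
      have "(0\<^sub>m 1 1 + transpose_mat X * B * X) $$ (0,0) = (B' + transpose_mat A' * LG * A') $$ (0,0)"
        using e2 by simp
      moreover have "(0\<^sub>m 1 1 + transpose_mat X * B * X) $$ (0,0) = (transpose_mat X * B * X) $$ (0,0)"
        using T by simp
      moreover have "(B' + transpose_mat A' * LG * A') $$ (0,0) = B' $$ (0,0) + (transpose_mat A' * LG * A') $$ (0,0)"
        using U by (intro index_add_mat(1)) auto
      ultimately have i2: "qf B x x = B' $$ (0,0) + qf LG a a"
        using entry_conj[OF X B, of 0 0] entry_conj[OF A' LG, of 0 0] colX
        by (simp add: a_def)
      define e where "e = vec 1 (\<lambda>_. 1::real)"
      have "PhiF B' (0\<^sub>m 1 1) e (0\<^sub>v 1) \<ge> 0"
        using pB' psd_real[OF B'] by (simp add: e_def)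
      then have "B' $$ (0,0) \<ge> 0"
        using B' by (simp add: PhiF_def qf_one e_def qf_zero_mat)
      with i1 i2 a show ?thesis by auto
    qed
    show "psd (2*N') (cplx B - \<i> \<cdot>\<^sub>m cplx (transpose_mat A * Omega N * A))"
      unfolding d_def[symmetric] J_def[symmetric] psd_iff[OF B J]
    proof (intro ballI conjI)
      fix x y :: "real vec" assume x: "x \<in> carrier_vec d" and y: "y \<in> carrier_vec d"
      show "PsiF B J x y = 0" using Bsym[OF x y] Jxx[OF x] Jxx[OF y] by (simp add: PsiF_def)
      obtain a where a: "a \<in> carrier_vec M" "A *\<^sub>v x = KG *\<^sub>v a" "qf LG a a \<le> qf B x x"
        using key1[OF x] by blast
      obtain b where b: "b \<in> carrier_vec M" "A *\<^sub>v y = KG *\<^sub>v b" "qf LG b b \<le> qf B y y"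
        using key1[OF y] by blast
      have "PhiF LG SG a b \<ge> 0" using pG psd_iff[OF LG SG] a b unfolding SG_def by blast
      moreover have "qf J x y = qf SG a b" "qf J y x = qf SG b a"
        unfolding J_def SG_def using qf_conj[OF A Omega_carrier x y] qf_conj[OF A Omega_carrier y x]
          qf_conj[OF KG Omega_carrier a(1) b(1)] qf_conj[OF KG Omega_carrier b(1) a(1)] a b by simp_all
      ultimately show "PhiF B J x y \<ge> 0" using a b by (simp add: PhiF_def)
    qed
  next
    assume P: "psd (2*N') (cplx B - \<i> \<cdot>\<^sub>m cplx (transpose_mat A * Omega N * A))"
    show "gaussian_incompatibility_breaking N N' A B c"
      unfolding gaussian_incompatibility_breaking_def gaussian_compatible_def
    proof (intro exI conjI ballI)
      show "1 \<le> d" using assms(2) by (simp add: d_def)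
      show "gaussian_obs N d (A, B, 0\<^sub>v d)" using A B P unfolding gaussian_obs_def d_def by simp
      fix E assume "E \<in> {channel_apply A B c E | E M. M \<ge> 1 \<and> gaussian_obs N' M E}"
      then obtain E0 M where E0: "E = channel_apply A B c E0" and EO0: "gaussian_obs N' M E0"
        by blast
      obtain K L m where KLm: "E0 = (K, L, m)" by (cases E0) auto
      have E: "E = channel_apply A B c (K, L, m)" and EO: "gaussian_obs N' M (K, L, m)"
        using E0 EO0 KLm by auto
      have K: "K \<in> carrier_mat d M" and L: "L \<in> carrier_mat M M" and m: "m \<in> carrier_vec M"
        and pE: "psd M (cplx L - \<i> \<cdot>\<^sub>m cplx (transpose_mat K * Omega N' * K))"
        using EO unfolding gaussian_obs_def d_def by auto
      define SK where "SK = transpose_mat K * Omega N' * K"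
      have SK: "SK \<in> carrier_mat M M" using K unfolding SK_def by auto
      have h: "\<forall>x\<in>carrier_vec M. \<forall>y\<in>carrier_vec M. PsiF L SK x y = 0 \<and> PhiF L SK x y \<ge> 0"
        using pE psd_iff[OF L SK] unfolding SK_def by blast
      have Sxx: "qf SK x x = 0" if x: "x \<in> carrier_vec M" for x
        using h x zero_carrier_vec[of M] qf_zero_l[OF L x] qf_zero_r[OF L] qf_zero_l[OF SK zero_carrier_vec]
        unfolding PsiF_def by fastforce
      have pL: "psd M (cplx L)"
        unfolding psd_real[OF L]
      proof (intro ballI conjI)
        fix x y :: "real vec" assume x: "x \<in> carrier_vec M" and y: "y \<in> carrier_vec M"
        show "PsiF L (0\<^sub>m M M) x y = 0"
          using h x y Sxx[OF x] Sxx[OF y] qf_zero_mat[OF x] qf_zero_mat[OF y] unfolding PsiF_def by fastforce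
        have "- y \<in> carrier_vec M" using y by simp
        then have "PhiF L SK x y \<ge> 0" "PhiF L SK x (- y) \<ge> 0" using h x y by blast+
        then show "PhiF L (0\<^sub>m M M) x y \<ge> 0"
          using qf_zero_mat[OF x] qf_zero_mat[OF y] qf_uminus_r[OF SK y] qf_uminus_l[OF SK x y]
            qf_uminus_r[OF L y, of "- y"] qf_uminus_l[OF L y y] x y
          unfolding PhiF_def by simp
      qed
      have cm: "m + transpose_mat K *\<^sub>v c \<in> carrier_vec M" using m K c by auto
      show "obtained_from E (A, B, 0\<^sub>v d)"
        unfolding obtained_from_def
      proof (intro exI conjI)
        show "gaussian_postproc (outdim (A, B, 0\<^sub>v d)) (outdim E) K L (m + transpose_mat K *\<^sub>v c)"
          unfolding gaussian_postproc_def outdim_def E channel_apply_def using K L cm pL by auto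
        have "transpose_mat K *\<^sub>v 0\<^sub>v d = 0\<^sub>v M" using K by (intro eq_vecI) auto
        then show "E = postprocess (A, B, 0\<^sub>v d) K L (m + transpose_mat K *\<^sub>v c)"
          unfolding E channel_apply_def postprocess_def using cm by auto
      qed
    qed
  qed
qed

end
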